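(* Let $\beta,\gamma\in\mathcal S_n$, where $\beta$ is a single $n$-cycle. Then $(\varepsilon,\beta,\gamma;(12))\in\mathrm{Par}(n)$ if and only if both of the following hold: <ul> <li>(i) the length of each cycle of $\gamma$ divides $2n$;</li> <li>(ii) at most one cycle of $\gamma$ has odd length.</li> </ul> Fixed points count as cycles of length $1$.
   Context: A Latin square of order $n$ is an $n\times n$ array with rows, columns and symbols indexed by $[n]$, each symbol occurring once in each row and each column, with triple set $O(L)$. Permutations act on the right; $\varepsilon$ is the identity. A paratopism $(\alpha,\beta,\gamma;(12))$ maps $L$ to $L^\sigma$ with triple set $\{(y\beta,x\alpha,z\gamma):(x,y,z)\in O(L)\}$; it is an autoparatopism of $L$ if $L^\sigma=L$. $\mathrm{Par}(n)$ is the set of paratopisms that are autoparatopisms of at least one Latin square of order $n$. *)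

theory Defs
  imports "HOL-Combinatorics.Combinatorics"
begin

text \<open>Rows, columns and symbols are indexed by [n] = {0..<n}.
A Latin square of order n is given by its triple set O(L).\<close>

definition latin_square :: "nat \<Rightarrow> (nat \<times> nat \<times> nat) set \<Rightarrow> bool" where
  "latin_square n L \<longleftrightarrow>
     L \<subseteq> {0..<n} \<times> {0..<n} \<times> {0..<n} \<and>
     (\<forall>x<n. \<forall>y<n. \<exists>!z. (x, y, z) \<in> L) \<and>
     (\<forall>x<n. \<forall>z<n. \<exists>!y. (x, y, z) \<in> L) \<and>
     (\<forall>y<n. \<forall>z<n. \<exists>!x. (x, y, z) \<in> L)"

text \<open>Image of the triple set under the paratopism (alpha, beta, gamma; (12)):
 {(y beta, x alpha, z gamma) : (x,y,z) in O(L)}; permutations act on the right,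
 so x alpha is written alpha x.\<close>

definition paratopism12_image ::
  "(nat \<Rightarrow> nat) \<Rightarrow> (nat \<Rightarrow> nat) \<Rightarrow> (nat \<Rightarrow> nat) \<Rightarrow> (nat \<times> nat \<times> nat) set \<Rightarrow> (nat \<times> nat \<times> nat) set" where
  "paratopism12_image \<alpha> \<beta> \<gamma> L = (\<lambda>(x, y, z). (\<beta> y, \<alpha> x, \<gamma> z)) ` L"

definition in_Par12 :: "nat \<Rightarrow> (nat \<Rightarrow> nat) \<Rightarrow> (nat \<Rightarrow> nat) \<Rightarrow> (nat \<Rightarrow> nat) \<Rightarrow> bool" where
  "in_Par12 n \<alpha> \<beta> \<gamma> \<longleftrightarrow>
     (\<exists>L. latin_square n L \<and> paratopism12_image \<alpha> \<beta> \<gamma> L = L)"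

end

theory Submission
  imports Defs
begin

lemma perm_inj_pow:
  assumes "permutation p" shows "inj_on (\<lambda>i. (p ^^ i) a) {..< least_power p a}"
  using cycle_of_permutation[OF assms, of a]
  by (simp add: distinct_map atLeast_upt)

lemma perm_orbit_eq:
  assumes "permutation p" shows "orbit p a = (\<lambda>i. (p ^^ i) a) ` {..< least_power p a}"
proof -
  have "orbit p a = range (\<lambda>i. (p ^^ i) a)"
    using orbit_altdef_permutation[OF assms] by auto
  also have "\<dots> = set (support p a)" using support_set[OF assms] by simp
  also have "\<dots> = (\<lambda>i. (p ^^ i) a) ` {..< least_power p a}"
    by (auto simp: atLeast_upt)
  finally show ?thesis .
qed

lemma card_orbit_lp:
  assumes "permutation p" shows "card (orbit p a) = least_power p a"
  using perm_orbit_eq[OF assms] perm_inj_pow[OF assms] card_image by fastforce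

lemma orbit_funpow_eq:
  assumes "permutation p" shows "orbit p ((p ^^ m) a) = orbit p a"
  by (induction m) (simp_all add: permutation_orbit_step[OF assms])

lemma orbit_mem_eq:
  assumes "permutation p" "b \<in> orbit p a" shows "orbit p b = orbit p a"
  using assms orbit_altdef_permutation[OF assms(1), of a] orbit_funpow_eq[OF assms(1)] by auto

lemma pow_lp_dvd:
  assumes "permutation p" shows "(p ^^ m) a = a \<longleftrightarrow> card (orbit p a) dvd m"
  using least_power_dvd[OF assms] card_orbit_lp[OF assms] by simp

locale LSQ =
  fixes n :: nat and \<beta> \<gamma> :: "nat \<Rightarrow> nat"
  assumes pb: "\<beta> permutes {0..<n}" and pg: "\<gamma> permutes {0..<n}"
    and cyc: "cyclic_on \<beta> {0..<n}"
begin

definition pii :: "nat \<Rightarrow> nat" where "pii i = (\<beta> ^^ i) 0"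

lemma permb: "permutation \<beta>" using pb permutation_permutes by blast
lemma permg: "permutation \<gamma>" using pg permutation_permutes by blast

lemma n_pos: "0 < n" using cyc unfolding cyclic_on_alldef by auto

lemma orb0: "orbit \<beta> 0 = {0..<n}"
  using cyc n_pos unfolding cyclic_on_alldef by auto

lemma lpb: "least_power \<beta> 0 = n"
  using card_orbit_lp[OF permb, of 0] orb0 by simp

lemma betan0: "(\<beta> ^^ n) 0 = 0"
  using pow_lp_dvd[OF permb, of n 0] orb0 by simp

lemma pi_lt: "pii i < n"
  using cyclic_on_funpow_in[OF cyc, of 0 i] n_pos unfolding pii_def by auto

lemma pi_mod: "pii (i mod n) = pii i"
  unfolding pii_def using funpow_mod_eq[OF betan0] by simp

lemma pi_Suc: "\<beta> (pii i) = pii (Suc i)"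
  unfolding pii_def by simp

lemma pi_add_n: "pii (i + n) = pii i"
  using pi_mod[of "i+n"] pi_mod[of i] by simp

lemma pi_n: "pii n = 0"
  using betan0 unfolding pii_def by simp

lemma pi_bij: "bij_betw pii {0..<n} {0..<n}"
proof -
  have "inj_on pii {..<n}" using perm_inj_pow[OF permb, of 0] lpb unfolding pii_def by simp
  moreover have "pii ` {..<n} = {0..<n}"
    using perm_orbit_eq[OF permb, of 0] lpb orb0 unfolding pii_def by simp
  ultimately show ?thesis unfolding bij_betw_def by (simp add: lessThan_atLeast0)
qed

definition lg :: "nat \<Rightarrow> nat" where "lg = the_inv_into {0..<n} pii"

lemma lg_lt: "x < n \<Longrightarrow> lg x < n"
  unfolding lg_def using pi_bij
  by (metis atLeastLessThan_iff bij_betw_def le0 the_inv_into_into subsetI)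

lemma pi_lg: "x < n \<Longrightarrow> pii (lg x) = x"
  unfolding lg_def using pi_bij
  by (metis atLeastLessThan_iff bij_betw_def le0 f_the_inv_into_f)

lemma lg_pi: "i < n \<Longrightarrow> lg (pii i) = i"
  unfolding lg_def using pi_bij
  by (metis atLeastLessThan_iff bij_betw_def le0 the_inv_into_f_f)

lemma betan: "x < n \<Longrightarrow> (\<beta> ^^ n) x = x"
proof -
  assume "x < n"
  then have "x = pii (lg x)" using pi_lg by simp
  then have "(\<beta> ^^ n) x = (\<beta> ^^ (n + lg x)) 0" unfolding pii_def by (simp add: funpow_add)
  also have "\<dots> = pii (lg x + n)" unfolding pii_def by (simp add: add.commute)
  also have "\<dots> = x" using pi_add_n \<open>x = _\<close> by simp
  finally show ?thesis .
qed

lemma gam_lt: "z < n \<Longrightarrow> (\<gamma> ^^ k) z < n"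
  using permutes_in_image[OF permutes_funpow[OF pg, of k], of z] by simp

lemma orbg_sub: "z < n \<Longrightarrow> orbit \<gamma> z \<subseteq> {0..<n}"
  using permutes_orbit_subset[OF pg, of z] by simp

end

lemma even_invol:
  fixes A :: "nat set"
  assumes "A \<subseteq> {0..<n}" "\<And>d. d \<in> A \<Longrightarrow> n - 1 - d \<in> A" "\<And>d. d \<in> A \<Longrightarrow> 2 * d + 1 \<noteq> n"
  shows "even (card A)"
proof -
  define A1 where "A1 = {d \<in> A. 2 * d + 1 < n}"
  define A2 where "A2 = {d \<in> A. 2 * d + 1 > n}"
  have fin: "finite A" using assms(1) finite_subset by blast
  have un: "A = A1 \<union> A2" using assms(3) unfolding A1_def A2_def by force
  have dis: "A1 \<inter> A2 = {}" unfolding A1_def A2_def by auto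
  have img: "(\<lambda>d. n - 1 - d) ` A1 = A2"
  proof
    show "(\<lambda>d. n - 1 - d) ` A1 \<subseteq> A2" using assms(2) unfolding A1_def A2_def by auto
    show "A2 \<subseteq> (\<lambda>d. n - 1 - d) ` A1"
    proof
      fix d assume d: "d \<in> A2"
      then have "d < n" using assms(1) unfolding A2_def by auto
      then have "d = n - 1 - (n - 1 - d)" by simp
      moreover have "n - 1 - d \<in> A1" using d assms(2) \<open>d < n\<close> unfolding A1_def A2_def by auto
      ultimately show "d \<in> (\<lambda>d. n - 1 - d) ` A1" by blast
    qed
  qed
  have inj: "inj_on (\<lambda>d. n - 1 - d) A1"
    using assms(1) unfolding A1_def inj_on_def by auto
  have "card A = card A1 + card A2" using un dis fin by (simp add: card_Un_disjoint)
  also have "card A2 = card A1" using img inj card_image by blast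
  finally show ?thesis by simp
qed

locale NEC = LSQ +
  fixes L assumes lat: "latin_square n L" and inv: "paratopism12_image id \<beta> \<gamma> L = L"
begin

definition sq :: "nat \<Rightarrow> nat \<Rightarrow> nat" where "sq x y = (THE z. (x, y, z) \<in> L)"

lemmas latD = lat[unfolded latin_square_def]
lemmas lat_sub = latD[THEN conjunct1]
lemmas lat_xy = latD[THEN conjunct2, THEN conjunct1]
lemmas lat_xz = latD[THEN conjunct2, THEN conjunct2, THEN conjunct1]
lemmas lat_yz = latD[THEN conjunct2, THEN conjunct2, THEN conjunct2]

lemma sq_in: "x < n \<Longrightarrow> y < n \<Longrightarrow> (x, y, sq x y) \<in> L"
proof -
  assume "x < n" "y < n"
  then have "\<exists>!z. (x, y, z) \<in> L" using lat_xy by simp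
  then show ?thesis unfolding sq_def by (rule theI')
qed

lemma in_sq: "(x, y, z) \<in> L \<Longrightarrow> x < n \<and> y < n \<and> z < n \<and> z = sq x y"
proof -
  assume h: "(x, y, z) \<in> L"
  then have "x < n \<and> y < n \<and> z < n" using lat_sub by auto
  moreover have "\<exists>!z. (x, y, z) \<in> L" using lat_xy calculation by simp
  then have "sq x y = z" unfolding sq_def using h by (rule the1_equality)
  then have "z = sq x y" by simp
  ultimately show ?thesis by simp
qed

lemma sq_lt: "x < n \<Longrightarrow> y < n \<Longrightarrow> sq x y < n"
  using sq_in in_sq by blast

lemma sq_row_bij: "x < n \<Longrightarrow> bij_betw (sq x) {0..<n} {0..<n}"
proof -
  assume x: "x < n"
  have "inj_on (sq x) {0..<n}"
  proof (rule inj_onI)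
    fix y1 y2 assume "y1 \<in> {0..<n}" "y2 \<in> {0..<n}" "sq x y1 = sq x y2"
    then have "(x, y1, sq x y1) \<in> L" "(x, y2, sq x y1) \<in> L" "sq x y1 < n"
      using sq_in[OF x, of y1] sq_in[OF x, of y2] sq_lt[OF x, of y1] by auto
    moreover have "\<exists>!y. (x, y, sq x y1) \<in> L" using lat_xz x \<open>sq x y1 < n\<close> by simp
    ultimately show "y1 = y2" by blast
  qed
  moreover have "sq x ` {0..<n} \<subseteq> {0..<n}" using sq_lt[OF x] by auto
  ultimately show ?thesis unfolding bij_betw_def using endo_inj_surj by blast
qed

lemma relA: "x < n \<Longrightarrow> y < n \<Longrightarrow> sq (\<beta> y) x = \<gamma> (sq x y)"
proof -
  assume "x < n" "y < n"
  then have "(x, y, sq x y) \<in> L" by (rule sq_in)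
  then have "(\<beta> y, x, \<gamma> (sq x y)) \<in> paratopism12_image id \<beta> \<gamma> L"
    unfolding paratopism12_image_def by force
  then have "(\<beta> y, x, \<gamma> (sq x y)) \<in> L" using inv by simp
  then show ?thesis using in_sq by simp
qed

definition F :: "nat \<Rightarrow> nat \<Rightarrow> nat" where "F i j = sq (pii i) (pii j)"

lemma F_lt: "F i j < n" unfolding F_def using sq_lt pi_lt by simp

lemma FA: "F (Suc j) i = \<gamma> (F i j)"
  unfolding F_def using relA[OF pi_lt pi_lt] pi_Suc by simp

lemma FB: "F (i + t) (j + t) = (\<gamma> ^^ (2 * t)) (F i j)"
proof (induction t)
  case (Suc t)
  have "F (i + Suc t) (j + Suc t) = \<gamma> (F (Suc (j + t)) (i + t))" using FA[of "i + t" "Suc (j + t)"] by simp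
  also have "\<dots> = \<gamma> (\<gamma> (F (i + t) (j + t)))" using FA[of "j + t" "i + t"] by simp
  finally show ?case using Suc by simp
qed simp

definition f0 :: "nat \<Rightarrow> nat" where "f0 d = F 0 d"

lemma f0_bij: "bij_betw f0 {0..<n} {0..<n}"
proof -
  have "f0 = sq 0 \<circ> pii" unfolding f0_def F_def fun_eq_iff using pii_def by simp
  then show ?thesis using bij_betw_trans[OF pi_bij sq_row_bij[OF n_pos]] by simp
qed

lemma gam2n: "z < n \<Longrightarrow> (\<gamma> ^^ (2 * n)) z = z"
proof -
  assume "z < n"
  then obtain j where j: "j < n" "z = f0 j" using f0_bij unfolding bij_betw_def by force
  have "(\<gamma> ^^ (2 * n)) z = F (0 + n) (j + n)" using FB[of 0 n j] j by (simp add: f0_def)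
  also have "\<dots> = z" unfolding F_def using pi_add_n[of 0] pi_add_n[of j] j by (simp add: f0_def F_def)
  finally show ?thesis .
qed

lemma cond1: "z < n \<Longrightarrow> card (orbit \<gamma> z) dvd 2 * n"
  using gam2n pow_lp_dvd[OF permg] by blast

lemma key: "d < n \<Longrightarrow> \<gamma> (f0 d) = (\<gamma> ^^ (2 * d + 2)) (f0 (n - 1 - d))"
proof -
  assume d: "d < n"
  have "\<gamma> (f0 d) = F (Suc d) 0" using FA[of d 0] unfolding f0_def by simp
  also have "\<dots> = F (0 + Suc d) ((n - 1 - d) + Suc d)"
    unfolding F_def using d pi_n by (simp add: pii_def)
  also have "\<dots> = (\<gamma> ^^ (2 * Suc d)) (f0 (n - 1 - d))" unfolding f0_def by (rule FB)
  also have "\<dots> = (\<gamma> ^^ (2 * d + 2)) (f0 (n - 1 - d))" by simp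
  finally show ?thesis .
qed

lemma key_orb: "d < n \<Longrightarrow> orbit \<gamma> (f0 (n - 1 - d)) = orbit \<gamma> (f0 d)"
proof -
  assume d: "d < n"
  have "orbit \<gamma> (f0 d) = orbit \<gamma> (\<gamma> (f0 d))" using permutation_orbit_step[OF permg] by simp
  also have "\<dots> = orbit \<gamma> ((\<gamma> ^^ (2 * d + 2)) (f0 (n - 1 - d)))" using key[OF d] by simp
  also have "\<dots> = orbit \<gamma> (f0 (n - 1 - d))" by (rule orbit_funpow_eq[OF permg])
  finally show ?thesis by simp
qed

lemma odd_orb:
  assumes z: "z < n" and od: "odd (card (orbit \<gamma> z))"
  shows "orbit \<gamma> z = orbit \<gamma> (f0 ((n - 1) div 2))"
proof -
  define A where "A = {d \<in> {0..<n}. orbit \<gamma> (f0 d) = orbit \<gamma> z}"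
  have surj: "\<And>w. w < n \<Longrightarrow> \<exists>d<n. f0 d = w"
    using f0_bij unfolding bij_betw_def by (metis atLeast0LessThan imageE lessThan_iff)
  have "f0 ` A = {w \<in> {0..<n}. orbit \<gamma> w = orbit \<gamma> z}"
  proof
    show "f0 ` A \<subseteq> {w \<in> {0..<n}. orbit \<gamma> w = orbit \<gamma> z}"
      using f0_bij unfolding A_def bij_betw_def by auto
    show "{w \<in> {0..<n}. orbit \<gamma> w = orbit \<gamma> z} \<subseteq> f0 ` A"
    proof
      fix w assume "w \<in> {w \<in> {0..<n}. orbit \<gamma> w = orbit \<gamma> z}"
      then obtain d where "d < n" "f0 d = w" "orbit \<gamma> w = orbit \<gamma> z" using surj by auto
      then show "w \<in> f0 ` A" unfolding A_def by auto
    qed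
  qed
  also have "\<dots> = orbit \<gamma> z"
  proof
    show "{w \<in> {0..<n}. orbit \<gamma> w = orbit \<gamma> z} \<subseteq> orbit \<gamma> z"
      using permutation_self_in_orbit[OF permg] by auto
    show "orbit \<gamma> z \<subseteq> {w \<in> {0..<n}. orbit \<gamma> w = orbit \<gamma> z}"
      using orbg_sub[OF z] orbit_mem_eq[OF permg] by auto
  qed
  moreover have "inj_on f0 A"
  proof -
    have "A \<subseteq> {0..<n}" unfolding A_def by auto
    then show ?thesis using f0_bij inj_on_subset unfolding bij_betw_def by blast
  qed
  ultimately have "card A = card (orbit \<gamma> z)" using card_image by metis
  then have ne: "\<not> even (card A)" using od by simp
  have sub: "A \<subseteq> {0..<n}" unfolding A_def by auto
  have cl: "\<And>d. d \<in> A \<Longrightarrow> n - 1 - d \<in> A"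
  proof -
    fix d assume "d \<in> A"
    then have "d < n" "orbit \<gamma> (f0 d) = orbit \<gamma> z" unfolding A_def by auto
    then show "n - 1 - d \<in> A" unfolding A_def using key_orb[of d] by simp
  qed
  have "\<exists>d\<in>A. 2 * d + 1 = n"
  proof (rule ccontr)
    assume "\<not> (\<exists>d\<in>A. 2 * d + 1 = n)"
    then have "even (card A)" using even_invol[of A n, OF sub cl] by blast
    then show False using ne by simp
  qed
  then obtain d where "d \<in> A" "2 * d + 1 = n" by blast
  then have "d = (n - 1) div 2" "orbit \<gamma> (f0 d) = orbit \<gamma> z" unfolding A_def by auto
  then show ?thesis by simp
qed

lemma cond2: "card {orbit \<gamma> z | z. z \<in> {0..<n} \<and> odd (card (orbit \<gamma> z))} \<le> 1"
proof -
  have "{orbit \<gamma> z | z. z \<in> {0..<n} \<and> odd (card (orbit \<gamma> z))} \<subseteq> {orbit \<gamma> (f0 ((n - 1) div 2))}"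
    using odd_orb by auto
  then show ?thesis using card_mono[of "{orbit \<gamma> (f0 ((n - 1) div 2))}"] by simp
qed

end

lemma dmod: "i < n \<Longrightarrow> j < (n::nat) \<Longrightarrow> (j + n - i) mod n = (if i \<le> j then j - i else j + n - i)"
proof (cases "i \<le> j")
  case True
  assume "i < n" "j < n"
  then obtain k where k: "j = i + k" using True by (auto simp: le_iff_add)
  then have "j + n - i = k + n" by simp
  then have "(j + n - i) mod n = k" using k \<open>j < n\<close> by simp
  then show ?thesis using True k by simp
next
  case False
  assume "i < n" "j < n"
  then show ?thesis using False by simp
qed

lemma arith1:
  fixes i j n :: nat
  assumes "i < n" "j < n"
  defines "d \<equiv> (if i \<le> j then j - i else j + n - i)"
  defines "j' \<equiv> (if Suc j < n then Suc j else 0)"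
  shows "(i + n - j') mod n = n - 1 - d \<and> (2 * i + 2 * d + 2) mod (2 * n) = 2 * j'"
proof (cases "i \<le> j")
  case True
  show ?thesis
  proof (cases "Suc j < n")
    case True2: True
    have e1: "i + n - j' = n - 1 - d" using True True2 unfolding d_def j'_def by simp
    have e2: "2 * i + 2 * d + 2 = 2 * j'" using True True2 unfolding d_def j'_def by simp
    have "n - 1 - d < n" using assms by simp
    then show ?thesis using e1 e2 True2 unfolding j'_def by simp
  next
    case False
    then have "j = n - 1" using assms by simp
    then have "(i + n - j') mod n = i" unfolding j'_def using assms by simp
    moreover have "2 * i + 2 * d + 2 = 2 * n" using True \<open>j = n - 1\<close> assms unfolding d_def by simp
    ultimately show ?thesis using True \<open>j = n - 1\<close> assms unfolding d_def j'_def by simp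
  qed
next
  case False
  then have sj: "Suc j < n" using assms by simp
  then have "i + n - j' = (i - Suc j) + n" using False unfolding j'_def by simp
  then have m1: "(i + n - j') mod n = i - Suc j" using assms by simp
  have "2 * i + 2 * d + 2 = (2 * j + 2) + 2 * n" using False assms unfolding d_def by simp
  moreover have "((2 * j + 2) + 2 * n) mod (2 * n) = (2 * j + 2) mod (2 * n)" by (rule mod_add_self2)
  moreover have "(2 * j + 2) mod (2 * n) = 2 * j + 2" using sj by (intro mod_less) simp
  ultimately have m2: "(2 * i + 2 * d + 2) mod (2 * n) = 2 * j'" using sj unfolding j'_def by simp
  have "n - 1 - d = i - Suc j" using False assms unfolding d_def by simp
  then show ?thesis using m1 m2 by simp
qed

lemma dinj1: "i < n \<Longrightarrow> j1 < n \<Longrightarrow> j2 < (n::nat) \<Longrightarrow> (j1 + n - i) mod n = (j2 + n - i) mod n \<Longrightarrow> j1 = j2"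
  by (simp add: dmod split: if_splits)

lemma dinj2: "i1 < n \<Longrightarrow> i2 < n \<Longrightarrow> j < (n::nat) \<Longrightarrow> (j + n - i1) mod n = (j + n - i2) mod n \<Longrightarrow> i1 = i2"
  by (simp add: dmod split: if_splits)

lemma sub_inj: "(n::nat) - 1 - a = n - 1 - b \<Longrightarrow> a < n \<Longrightarrow> b < n \<Longrightarrow> a = b"
  by arith

locale CONS = LSQ +
  fixes f :: "nat \<Rightarrow> nat"
  assumes fb: "bij_betw f {0..<n} {0..<n}"
    and R: "\<And>d. d < n \<Longrightarrow> (\<gamma> ^^ (2 * d + 1)) (f (n - 1 - d)) = f d"
    and g2n: "\<And>z. z < n \<Longrightarrow> (\<gamma> ^^ (2 * n)) z = z"
begin

lemma gmod: "z < n \<Longrightarrow> a mod (2 * n) = b mod (2 * n) \<Longrightarrow> (\<gamma> ^^ a) z = (\<gamma> ^^ b) z"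
  by (metis funpow_mod_eq g2n)

lemma f_lt: "d < n \<Longrightarrow> f d < n"
  using fb unfolding bij_betw_def by auto

lemma f_inj: "d1 < n \<Longrightarrow> d2 < n \<Longrightarrow> f d1 = f d2 \<Longrightarrow> d1 = d2"
  using fb unfolding bij_betw_def inj_on_def by auto

lemma ginj: "(\<gamma> ^^ k) a = (\<gamma> ^^ k) b \<Longrightarrow> a = b"
proof -
  have "inj \<gamma>" using pg permutes_inj by blast
  then have "inj (\<gamma> ^^ k)" by (rule inj_fn)
  then show "(\<gamma> ^^ k) a = (\<gamma> ^^ k) b \<Longrightarrow> a = b" by (simp add: inj_eq)
qed

definition Lf :: "nat \<Rightarrow> nat \<Rightarrow> nat" where
  "Lf x y = (\<gamma> ^^ (2 * lg x)) (f ((lg y + n - lg x) mod n))"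

definition LL :: "(nat \<times> nat \<times> nat) set" where
  "LL = {(x, y, Lf x y) | x y. x < n \<and> y < n}"

lemma memLL: "(x, y, z) \<in> LL \<longleftrightarrow> x < n \<and> y < n \<and> z = Lf x y"
  unfolding LL_def by auto

lemma dlt: "i < n \<Longrightarrow> (j + n - i) mod n < n"
  using n_pos by simp

lemma Lf_lt: "x < n \<Longrightarrow> y < n \<Longrightarrow> Lf x y < n"
  unfolding Lf_def using gam_lt f_lt dlt lg_lt by simp

lemma COL: "i < n \<Longrightarrow> j < n \<Longrightarrow>
   (\<gamma> ^^ (2 * i)) (f ((j + n - i) mod n)) = (\<gamma> ^^ (2 * j + 1)) (f (n - 1 - (j + n - i) mod n))"
proof -
  assume ij: "i < n" "j < n"
  define d where "d = (j + n - i) mod n"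
  have d: "d < n" "d = (if i \<le> j then j - i else j + n - i)" unfolding d_def using dmod ij dlt by auto
  have w: "f (n - 1 - d) < n" using f_lt d by simp
  have "(\<gamma> ^^ (2 * i)) (f d) = (\<gamma> ^^ (2 * i)) ((\<gamma> ^^ (2 * d + 1)) (f (n - 1 - d)))" using R d by simp
  also have "\<dots> = (\<gamma> ^^ (2 * i + (2 * d + 1))) (f (n - 1 - d))" by (simp only: funpow_add o_apply)
  also have "\<dots> = (\<gamma> ^^ (2 * j + 1)) (f (n - 1 - d))"
  proof (rule gmod[OF w])
    show "(2 * i + (2 * d + 1)) mod (2 * n) = (2 * j + 1) mod (2 * n)"
    proof (cases "i \<le> j")
      case True
      then have "2 * i + (2 * d + 1) = 2 * j + 1" using d by simp
      then show ?thesis by simp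
    next
      case False
      then have "2 * i + (2 * d + 1) = (2 * j + 1) + 2 * n" using d ij by simp
      then show ?thesis by (simp only: mod_add_self2)
    qed
  qed
  finally show ?thesis unfolding d_def .
qed

lemma row_inj: "x < n \<Longrightarrow> inj_on (Lf x) {0..<n}"
proof (rule inj_onI)
  fix y1 y2 assume x: "x < n" and y: "y1 \<in> {0..<n}" "y2 \<in> {0..<n}" and e: "Lf x y1 = Lf x y2"
  have "f ((lg y1 + n - lg x) mod n) = f ((lg y2 + n - lg x) mod n)"
    using ginj[OF e[unfolded Lf_def]] .
  then have "(lg y1 + n - lg x) mod n = (lg y2 + n - lg x) mod n"
    by (rule f_inj[OF dlt[OF lg_lt[OF x]] dlt[OF lg_lt[OF x]]])
  then have "lg y1 = lg y2" by (rule dinj1[of "lg x" n, rotated 3]) (use lg_lt x y in auto)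
  then have "pii (lg y1) = pii (lg y2)" by simp
  then show "y1 = y2" using pi_lg y by simp
qed

lemma col_inj: "y < n \<Longrightarrow> inj_on (\<lambda>x. Lf x y) {0..<n}"
proof (rule inj_onI)
  fix x1 x2 assume y: "y < n" and x: "x1 \<in> {0..<n}" "x2 \<in> {0..<n}" and e: "Lf x1 y = Lf x2 y"
  have l: "lg x1 < n" "lg x2 < n" "lg y < n" using lg_lt x y by auto
  have "(\<gamma> ^^ (2 * lg y + 1)) (f (n - 1 - (lg y + n - lg x1) mod n)) =
        (\<gamma> ^^ (2 * lg y + 1)) (f (n - 1 - (lg y + n - lg x2) mod n))"
    using e COL[of "lg x1" "lg y"] COL[of "lg x2" "lg y"] l unfolding Lf_def by simp
  then have "f (n - 1 - (lg y + n - lg x1) mod n) = f (n - 1 - (lg y + n - lg x2) mod n)"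
    by (rule ginj)
  then have "n - 1 - (lg y + n - lg x1) mod n = n - 1 - (lg y + n - lg x2) mod n"
    by (rule f_inj[rotated 2]) (use n_pos in auto)
  then have "(lg y + n - lg x1) mod n = (lg y + n - lg x2) mod n"
    by (rule sub_inj[OF _ dlt[OF l(1)] dlt[OF l(2)]])
  then have "lg x1 = lg x2" by (rule dinj2[of _ n _ "lg y", rotated 3]) (use l in auto)
  then have "pii (lg x1) = pii (lg x2)" by simp
  then show "x1 = x2" using pi_lg x by simp
qed

lemma row_surj: "x < n \<Longrightarrow> z < n \<Longrightarrow> \<exists>y<n. Lf x y = z"
proof -
  assume x: "x < n" and z: "z < n"
  have "Lf x ` {0..<n} \<subseteq> {0..<n}" using Lf_lt[OF x] by auto
  then have "Lf x ` {0..<n} = {0..<n}"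
    using endo_inj_surj[OF _ _ row_inj[OF x]] by blast
  then have "z \<in> Lf x ` {0..<n}" using z by simp
  then show ?thesis by auto
qed

lemma col_surj: "y < n \<Longrightarrow> z < n \<Longrightarrow> \<exists>x<n. Lf x y = z"
proof -
  assume y: "y < n" and z: "z < n"
  have "(\<lambda>x. Lf x y) ` {0..<n} \<subseteq> {0..<n}" using Lf_lt y by auto
  then have "(\<lambda>x. Lf x y) ` {0..<n} = {0..<n}"
    using endo_inj_surj[OF _ _ col_inj[OF y]] by blast
  then have "z \<in> (\<lambda>x. Lf x y) ` {0..<n}" using z by simp
  then show ?thesis by auto
qed

lemma LL_latin: "latin_square n LL"
  unfolding latin_square_def
proof (intro conjI allI impI)
  show "LL \<subseteq> {0..<n} \<times> {0..<n} \<times> {0..<n}" unfolding LL_def using Lf_lt by auto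
next
  fix x y assume "x < n" "y < n"
  then show "\<exists>!z. (x, y, z) \<in> LL" unfolding memLL by simp
next
  fix x z assume x: "x < n" and z: "z < n"
  obtain y where "y < n" "Lf x y = z" using row_surj[OF x z] by blast
  show "\<exists>!y. (x, y, z) \<in> LL" unfolding memLL
  proof (rule ex1I[where a = y])
    show "x < n \<and> y < n \<and> z = Lf x y" using x \<open>y < n\<close> \<open>Lf x y = z\<close> by simp
    fix y' assume "x < n \<and> y' < n \<and> z = Lf x y'"
    then show "y' = y" using row_inj[OF x] \<open>y < n\<close> \<open>Lf x y = z\<close> unfolding inj_on_def by auto
  qed
next
  fix y z assume y: "y < n" and z: "z < n"
  obtain x where "x < n" "Lf x y = z" using col_surj[OF y z] by blast
  show "\<exists>!x. (x, y, z) \<in> LL" unfolding memLL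
  proof (rule ex1I[where a = x])
    show "x < n \<and> y < n \<and> z = Lf x y" using y \<open>x < n\<close> \<open>Lf x y = z\<close> by simp
    fix x' assume "x' < n \<and> y < n \<and> z = Lf x' y"
    then show "x' = x" using col_inj[OF y] \<open>x < n\<close> \<open>Lf x y = z\<close> unfolding inj_on_def by auto
  qed
qed

lemma PAR: "x < n \<Longrightarrow> y < n \<Longrightarrow> \<gamma> (Lf x y) = Lf (\<beta> y) x"
proof -
  assume x: "x < n" and y: "y < n"
  define i where "i = lg x"
  define j where "j = lg y"
  have ij: "i < n" "j < n" using lg_lt x y unfolding i_def j_def by auto
  define j' where "j' = (if Suc j < n then Suc j else 0)"
  define d where "d = (if i \<le> j then j - i else j + n - i)"
  have dd1: "(j + n - i) mod n = d" using dmod[OF ij(1) ij(2)] unfolding d_def by simp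
  have dd: "(j + n - i) mod n = d" "d < n" using dd1 dlt[OF ij(1), of j] by auto
  have by': "\<beta> y = pii j'"
  proof -
    have "y = pii j" using pi_lg y unfolding j_def by simp
    then have "\<beta> y = pii (Suc j)" using pi_Suc by simp
    also have "\<dots> = pii (Suc j mod n)" using pi_mod by simp
    also have "Suc j mod n = j'"
    proof (cases "Suc j < n")
      case True then show ?thesis unfolding j'_def by simp
    next
      case False then have "Suc j = n" using ij by simp
      then show ?thesis unfolding j'_def by simp
    qed
    finally show ?thesis .
  qed
  have j'lt: "j' < n" unfolding j'_def using n_pos by simp
  have lgb: "lg (\<beta> y) = j'" using by' lg_pi j'lt by simp
  have A: "(i + n - j') mod n = n - 1 - d" "(2 * i + 2 * d + 2) mod (2 * n) = 2 * j'"
    using arith1[OF ij] unfolding d_def j'_def by auto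
  have w: "f (n - 1 - d) < n" using f_lt dd by simp
  have c1: "\<gamma> (Lf x y) = \<gamma> ((\<gamma> ^^ (2 * i)) (f d))"
    unfolding Lf_def i_def[symmetric] j_def[symmetric] using dd by simp
  have c2: "f d = (\<gamma> ^^ (2 * d + 1)) (f (n - 1 - d))" using R dd by simp
  have ex: "2 * i + 2 * d + 2 = Suc (2 * i + (2 * d + 1))" by simp
  have c3: "\<gamma> ((\<gamma> ^^ (2 * i)) ((\<gamma> ^^ (2 * d + 1)) (f (n - 1 - d)))) = (\<gamma> ^^ (2 * i + 2 * d + 2)) (f (n - 1 - d))"
    unfolding ex by (simp only: funpow_add o_apply funpow.simps(2))
  have c4: "(\<gamma> ^^ (2 * i + 2 * d + 2)) (f (n - 1 - d)) = (\<gamma> ^^ (2 * j')) (f (n - 1 - d))"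
    by (rule gmod[OF w]) (use A(2) j'lt in simp)
  have c5: "(\<gamma> ^^ (2 * j')) (f (n - 1 - d)) = Lf (\<beta> y) x"
    unfolding Lf_def lgb i_def[symmetric] using A(1) by simp
  show ?thesis using c1 c2 c3 c4 c5 by simp
qed

lemma LL_par: "paratopism12_image id \<beta> \<gamma> LL = LL"
proof -
  let ?h = "\<lambda>(x, y, z). (\<beta> y, id x, \<gamma> z)"
  have sub: "?h ` LL \<subseteq> LL"
  proof
    fix t assume "t \<in> ?h ` LL"
    then obtain x y where xy: "x < n" "y < n" "t = (\<beta> y, x, \<gamma> (Lf x y))" unfolding LL_def by auto
    have "\<beta> y < n" using permutes_in_image[OF pb] xy by simp
    then show "t \<in> LL" using xy PAR memLL by simp
  qed
  have ib: "inj \<beta>" and ig: "inj \<gamma>" using pb pg permutes_inj by blast+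
  have "inj_on ?h LL"
  proof (rule inj_onI)
    fix a b :: "nat \<times> nat \<times> nat"
    assume e: "?h a = ?h b"
    show "a = b" using e ib ig by (cases a; cases b) (auto simp: inj_eq)
  qed
  then have "card (?h ` LL) = card LL" by (rule card_image)
  moreover have "finite LL"
  proof (rule finite_subset)
    show "LL \<subseteq> {0..<n} \<times> {0..<n} \<times> {0..<n}" unfolding LL_def using Lf_lt by auto
  qed auto
  ultimately have "?h ` LL = LL" using sub card_subset_eq by blast
  then show ?thesis unfolding paratopism12_image_def by simp
qed

lemma in_par: "in_Par12 n id \<beta> \<gamma>"
  unfolding in_Par12_def using LL_latin LL_par by blast

end

lemma modinj:
  fixes a s j1 j2 :: nat
  assumes "s \<le> j1" "j1 < s + a" "s \<le> j2" "j2 < s + a" "j1 mod a = j2 mod a"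
  shows "j1 = j2"
proof (rule ccontr)
  assume ne: "j1 \<noteq> j2"
  show False
  proof (cases "j1 < j2")
    case True
    then have "a dvd (j2 - j1)" using assms(5) mod_eq_dvd_iff_nat[of j1 j2 a] by simp
    moreover have "0 < j2 - j1" "j2 - j1 < a" using True assms by auto
    ultimately show False using nat_dvd_not_less by blast
  next
    case False
    then have lt: "j2 < j1" using ne by simp
    then have "a dvd (j1 - j2)" using assms(5) mod_eq_dvd_iff_nat[of j2 j1 a] by simp
    moreover have "0 < j1 - j2" "j1 - j2 < a" using lt assms by auto
    ultimately show False using nat_dvd_not_less by blast
  qed
qed

lemma odd_dvd_double: "odd (k::nat) \<Longrightarrow> k dvd 2 * n \<Longrightarrow> k dvd n"
proof -
  assume "odd k" "k dvd 2 * n"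
  then have "coprime k 2" by simp
  then show "k dvd n" using \<open>k dvd 2 * n\<close> coprime_dvd_mult_right_iff by blast
qed

locale SUF = LSQ +
  assumes c1: "\<forall>z\<in>{0..<n}. card (orbit \<gamma> z) dvd 2 * n"
    and c2: "card {orbit \<gamma> z | z. z \<in> {0..<n} \<and> odd (card (orbit \<gamma> z))} \<le> 1"
begin

lemma g2n: "z < n \<Longrightarrow> (\<gamma> ^^ (2 * n)) z = z"
  using c1 pow_lp_dvd[OF permg] by simp

lemma self_orb: "z \<in> orbit \<gamma> z" by (rule permutation_self_in_orbit[OF permg])

lemma orb_eq: "w \<in> orbit \<gamma> z \<Longrightarrow> orbit \<gamma> w = orbit \<gamma> z"
  by (rule orbit_mem_eq[OF permg])

lemma pw_orb: "(\<gamma> ^^ i) z \<in> orbit \<gamma> z"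
  by (rule funpow_in_orbit[OF self_orb])

lemma inj_pw: "inj_on (\<lambda>i. (\<gamma> ^^ i) z) {..<card (orbit \<gamma> z)}"
  using perm_inj_pow[OF permg] card_orbit_lp[OF permg] by simp

lemma fin_orb: "z < n \<Longrightarrow> finite (orbit \<gamma> z)"
  using orbg_sub finite_subset by blast

lemma card_orb_pos: "z < n \<Longrightarrow> 0 < card (orbit \<gamma> z)"
  using fin_orb self_orb card_gt_0_iff by blast

definition clsd :: "nat set \<Rightarrow> bool" where
  "clsd S \<longleftrightarrow> S \<subseteq> {0..<n} \<and> (\<forall>z\<in>S. orbit \<gamma> z \<subseteq> S)"

lemma rem_orb:
  assumes cl: "clsd S" and r: "r \<in> S"
  shows "clsd (S - orbit \<gamma> r)" "orbit \<gamma> r \<subseteq> S"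
    "card S = card (S - orbit \<gamma> r) + card (orbit \<gamma> r)"
proof -
  show sub: "orbit \<gamma> r \<subseteq> S" using cl r unfolding clsd_def by auto
  show "clsd (S - orbit \<gamma> r)" unfolding clsd_def
  proof (intro conjI ballI)
    show "S - orbit \<gamma> r \<subseteq> {0..<n}" using cl unfolding clsd_def by auto
    fix z assume z: "z \<in> S - orbit \<gamma> r"
    show "orbit \<gamma> z \<subseteq> S - orbit \<gamma> r"
    proof
      fix w assume w: "w \<in> orbit \<gamma> z"
      have "w \<in> S" using w z cl unfolding clsd_def by auto
      moreover have "w \<notin> orbit \<gamma> r"
      proof
        assume "w \<in> orbit \<gamma> r"
        then have "orbit \<gamma> z = orbit \<gamma> r" using orb_eq w by metis
        then show False using z self_orb by auto
      qed
      ultimately show "w \<in> S - orbit \<gamma> r" by simp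
    qed
  qed
  have "finite S" using cl finite_subset unfolding clsd_def by blast
  then show "card S = card (S - orbit \<gamma> r) + card (orbit \<gamma> r)"
    using sub card_Diff_subset[of "orbit \<gamma> r" S] card_mono[of S "orbit \<gamma> r"] finite_subset[OF sub]
    by simp
qed

lemma EV: "clsd S \<Longrightarrow> (\<forall>z\<in>S. even (card (orbit \<gamma> z))) \<Longrightarrow> even (card S)"
proof (induction "card S" arbitrary: S rule: less_induct)
  case less
  show ?case
  proof (cases "S = {}")
    case True then show ?thesis by simp
  next
    case False
    then obtain r where r: "r \<in> S" by blast
    have rn: "r < n" using r less.prems(1) unfolding clsd_def by auto
    note R = rem_orb[OF less.prems(1) r]
    have "card (S - orbit \<gamma> r) < card S" using R(3) card_orb_pos[OF rn] by simp
    moreover have "\<forall>z\<in>S - orbit \<gamma> r. even (card (orbit \<gamma> z))" using less.prems(2) by auto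
    ultimately have "even (card (S - orbit \<gamma> r))" using less.hyps R(1) by blast
    then show ?thesis using R(3) less.prems(2) r by simp
  qed
qed

lemma expmod:
  fixes j a :: nat assumes "0 < a"
  shows "(2 * j + 1 + (2 * a - 1 - j mod a)) mod (2 * a) = j mod a"
proof -
  define q t where "q = j div a" and "t = j mod a"
  have t: "t < a" using assms unfolding t_def by simp
  have j: "j = a * q + t" unfolding q_def t_def by simp
  have "2 * j + 1 + (2 * a - 1 - j mod a) = t + (2 * a) * (q + 1)"
    using t unfolding j t_def[symmetric] by (simp add: algebra_simps)
  moreover have "(t + (2 * a) * (q + 1)) mod (2 * a) = t mod (2 * a)" by (rule mod_mult_self2)
  moreover have "t mod (2 * a) = t" using t by simp
  ultimately show ?thesis unfolding t_def[symmetric] by simp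
qed

lemma blk:
  assumes r: "r < n" and ca: "card (orbit \<gamma> r) = 2 * a" and a: "0 < a" "a \<le> m" and mn: "2 * m \<le> n"
  shows "bij_betw (\<lambda>j. if j < m then (\<gamma> ^^ (j mod a)) r else (\<gamma> ^^ (2 * a - 1 - (n - 1 - j) mod a)) r)
           ({m - a..<m} \<union> {n - m..<n - m + a}) (orbit \<gamma> r)"
    "\<And>j. j \<in> {m - a..<m} \<Longrightarrow>
       (\<gamma> ^^ (2 * j + 1)) ((\<lambda>j. if j < m then (\<gamma> ^^ (j mod a)) r else (\<gamma> ^^ (2 * a - 1 - (n - 1 - j) mod a)) r) (n - 1 - j))
       = (\<lambda>j. if j < m then (\<gamma> ^^ (j mod a)) r else (\<gamma> ^^ (2 * a - 1 - (n - 1 - j) mod a)) r) j"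
proof -
  define h where "h = (\<lambda>j. if j < m then (\<gamma> ^^ (j mod a)) r else (\<gamma> ^^ (2 * a - 1 - (n - 1 - j) mod a)) r)"
  define B where "B = {m - a..<m} \<union> {n - m..<n - m + a}"
  define \<psi> where "\<psi> = (\<lambda>j. if j < m then j mod a else 2 * a - 1 - (n - 1 - j) mod a)"
  have hpsi: "h j = (\<gamma> ^^ (\<psi> j)) r" for j unfolding h_def \<psi>_def by simp
  have psi_lt: "\<psi> j < 2 * a" for j unfolding \<psi>_def using a mod_less_divisor[OF a(1), of j]
    by auto
  have psi_inj: "inj_on \<psi> B"
  proof (rule inj_onI)
    fix j1 j2 assume j1: "j1 \<in> B" and j2: "j2 \<in> B" and e: "\<psi> j1 = \<psi> j2"
    have am: "m \<le> n - m" using mn by simp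
    show "j1 = j2"
    proof (cases "j1 < m")
      case T1: True
      show ?thesis
      proof (cases "j2 < m")
        case T2: True
        then have "j1 mod a = j2 mod a" using e T1 unfolding \<psi>_def by simp
        moreover have "m - a \<le> j1" "j1 < m - a + a" "m - a \<le> j2" "j2 < m - a + a"
          using j1 j2 T1 T2 a am unfolding B_def by auto
        ultimately show ?thesis using modinj by blast
      next
        case F2: False
        have "\<psi> j1 < a" using T1 a unfolding \<psi>_def by simp
        moreover have "\<psi> j2 \<ge> a" using F2 a unfolding \<psi>_def
          using mod_less_divisor[OF a(1), of "n - 1 - j2"] by simp
        ultimately show ?thesis using e by simp
      qed
    next
      case F1: False
      show ?thesis
      proof (cases "j2 < m")
        case T2: True
        have "\<psi> j2 < a" using T2 a unfolding \<psi>_def by simp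
        moreover have "\<psi> j1 \<ge> a" using F1 a unfolding \<psi>_def
          using mod_less_divisor[OF a(1), of "n - 1 - j1"] by simp
        ultimately show ?thesis using e by simp
      next
        case F2: False
        have l1: "(n - 1 - j1) mod a < a" "(n - 1 - j2) mod a < a" using a by auto
        have "2 * a - 1 - (n - 1 - j1) mod a = 2 * a - 1 - (n - 1 - j2) mod a"
          using e F1 F2 unfolding \<psi>_def by simp
        then have "(n - 1 - j1) mod a = (n - 1 - j2) mod a" using l1 by linarith
        moreover have "j1 \<in> {n - m..<n - m + a}" "j2 \<in> {n - m..<n - m + a}"
          using j1 j2 F1 F2 am unfolding B_def by auto
        moreover then have "m - a \<le> n - 1 - j1" "n - 1 - j1 < m - a + a"
           "m - a \<le> n - 1 - j2" "n - 1 - j2 < m - a + a" using a am mn by auto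
        ultimately have "n - 1 - j1 = n - 1 - j2" using modinj by blast
        then show ?thesis using \<open>j1 \<in> {n - m..<n - m + a}\<close> \<open>j2 \<in> {n - m..<n - m + a}\<close> am a
          by auto
      qed
    qed
  qed
  have h_inj: "inj_on h B"
  proof (rule inj_onI)
    fix j1 j2 assume "j1 \<in> B" "j2 \<in> B" "h j1 = h j2"
    then have "(\<gamma> ^^ (\<psi> j1)) r = (\<gamma> ^^ (\<psi> j2)) r" using hpsi by simp
    then have "\<psi> j1 = \<psi> j2" using inj_pw[of r] psi_lt ca unfolding inj_on_def by auto
    then show "j1 = j2" using psi_inj \<open>j1 \<in> B\<close> \<open>j2 \<in> B\<close> unfolding inj_on_def by blast
  qed
  have img: "h ` B \<subseteq> orbit \<gamma> r" using hpsi pw_orb by auto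
  have cB: "card B = 2 * a"
  proof -
    have "{m - a..<m} \<inter> {n - m..<n - m + a} = {}" using mn by auto
    then have "card B = card {m - a..<m} + card {n - m..<n - m + a}" unfolding B_def
      by (simp add: card_Un_disjoint)
    then show ?thesis using a by simp
  qed
  have "card (h ` B) = card (orbit \<gamma> r)" using card_image[OF h_inj] cB ca by simp
  then have "h ` B = orbit \<gamma> r" using card_subset_eq[OF fin_orb[OF r] img] by simp
  then have "bij_betw h B (orbit \<gamma> r)" using h_inj unfolding bij_betw_def B_def by simp
  then show "bij_betw (\<lambda>j. if j < m then (\<gamma> ^^ (j mod a)) r else (\<gamma> ^^ (2 * a - 1 - (n - 1 - j) mod a)) r)
           ({m - a..<m} \<union> {n - m..<n - m + a}) (orbit \<gamma> r)" unfolding h_def B_def .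
next
  fix j assume j: "j \<in> {m - a..<m}"
  have "\<not> (n - 1 - j < m)" using j mn by auto
  moreover have "n - 1 - (n - 1 - j) = j" using j mn by auto
  ultimately have hh: "(\<lambda>j. if j < m then (\<gamma> ^^ (j mod a)) r else (\<gamma> ^^ (2 * a - 1 - (n - 1 - j) mod a)) r) (n - 1 - j)
     = (\<gamma> ^^ (2 * a - 1 - j mod a)) r" by simp
  have r2: "(\<gamma> ^^ (2 * a)) r = r" using pow_lp_dvd[OF permg] ca by simp
  have "(\<gamma> ^^ (2 * j + 1)) ((\<gamma> ^^ (2 * a - 1 - j mod a)) r) = (\<gamma> ^^ (2 * j + 1 + (2 * a - 1 - j mod a))) r"
    by (simp only: funpow_add o_apply)
  also have "\<dots> = (\<gamma> ^^ ((2 * j + 1 + (2 * a - 1 - j mod a)) mod (2 * a))) r"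
    using funpow_mod_eq[OF r2] by simp
  also have "\<dots> = (\<gamma> ^^ (j mod a)) r" using expmod[OF a(1)] by simp
  finally show "(\<gamma> ^^ (2 * j + 1)) ((\<lambda>j. if j < m then (\<gamma> ^^ (j mod a)) r else (\<gamma> ^^ (2 * a - 1 - (n - 1 - j) mod a)) r) (n - 1 - j))
       = (\<lambda>j. if j < m then (\<gamma> ^^ (j mod a)) r else (\<gamma> ^^ (2 * a - 1 - (n - 1 - j) mod a)) r) j"
    using hh j by simp
qed


lemma oblk:
  assumes nd: "n = 2 * d0 + 1" and r: "r < n" and ca: "card (orbit \<gamma> r) = 2 * a + 1" and ad: "a \<le> d0"
  shows "bij_betw (\<lambda>e. (\<gamma> ^^ (e + a - d0)) r) {d0 - a..<d0 + a + 1} (orbit \<gamma> r)"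
    "\<And>e. e \<in> {d0 - a..<d0 + a + 1} \<Longrightarrow>
       (\<gamma> ^^ (2 * e + 1)) ((\<gamma> ^^ ((n - 1 - e) + a - d0)) r) = (\<gamma> ^^ (e + a - d0)) r"
proof -
  define h where "h = (\<lambda>e. (\<gamma> ^^ (e + a - d0)) r)"
  define B where "B = {d0 - a..<d0 + a + 1}"
  have h_inj: "inj_on h B"
  proof (rule inj_onI)
    fix e1 e2 assume e1: "e1 \<in> B" and e2: "e2 \<in> B" and e: "h e1 = h e2"
    have "e1 + a - d0 < card (orbit \<gamma> r)" "e2 + a - d0 < card (orbit \<gamma> r)"
      using e1 e2 ca unfolding B_def by auto
    then have "e1 + a - d0 = e2 + a - d0" using inj_pw[of r] e unfolding h_def inj_on_def by auto
    then show "e1 = e2" using e1 e2 unfolding B_def by auto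
  qed
  have img: "h ` B \<subseteq> orbit \<gamma> r" unfolding h_def using pw_orb by auto
  have cB: "card B = 2 * a + 1" unfolding B_def using ad by simp
  have "card (h ` B) = card (orbit \<gamma> r)" using card_image[OF h_inj] cB ca by simp
  then have "h ` B = orbit \<gamma> r" using card_subset_eq[OF fin_orb[OF r] img] by simp
  then have "bij_betw h B (orbit \<gamma> r)" using h_inj unfolding bij_betw_def by simp
  then show "bij_betw (\<lambda>e. (\<gamma> ^^ (e + a - d0)) r) {d0 - a..<d0 + a + 1} (orbit \<gamma> r)"
    unfolding h_def B_def .
next
  fix e assume e: "e \<in> {d0 - a..<d0 + a + 1}"
  have "odd (card (orbit \<gamma> r))" using ca by simp
  moreover have "card (orbit \<gamma> r) dvd 2 * n" using c1 r by simp
  ultimately have "card (orbit \<gamma> r) dvd n" by (rule odd_dvd_double)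
  then have rn: "(\<gamma> ^^ n) r = r" using pow_lp_dvd[OF permg] by simp
  have ex: "2 * e + 1 + ((n - 1 - e) + a - d0) = (e + a - d0) + n" using e nd ad by auto
  have "(\<gamma> ^^ (2 * e + 1)) ((\<gamma> ^^ ((n - 1 - e) + a - d0)) r) = (\<gamma> ^^ (2 * e + 1 + ((n - 1 - e) + a - d0))) r"
    by (simp only: funpow_add o_apply)
  also have "\<dots> = (\<gamma> ^^ (e + a - d0)) ((\<gamma> ^^ n) r)" unfolding ex
    by (simp only: funpow_add o_apply)
  also have "\<dots> = (\<gamma> ^^ (e + a - d0)) r" using rn by simp
  finally show "(\<gamma> ^^ (2 * e + 1)) ((\<gamma> ^^ ((n - 1 - e) + a - d0)) r) = (\<gamma> ^^ (e + a - d0)) r" .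
qed

lemma EP:
  "clsd S \<Longrightarrow> (\<forall>z\<in>S. even (card (orbit \<gamma> z))) \<Longrightarrow> card S = 2 * m \<Longrightarrow> 2 * m \<le> n \<Longrightarrow>
   \<exists>f. bij_betw f ({0..<m} \<union> {n - m..<n}) S \<and> (\<forall>d<m. (\<gamma> ^^ (2 * d + 1)) (f (n - 1 - d)) = f d)"
proof (induction m arbitrary: S rule: less_induct)
  case (less m)
  show ?case
  proof (cases "m = 0")
    case True
    then have "S = {}" using less.prems(1,3) finite_subset unfolding clsd_def by fastforce
    then show ?thesis using True by (auto simp: bij_betw_def)
  next
    case False
    then have "S \<noteq> {}" using less.prems(3) by auto
    then obtain r where r: "r \<in> S" by blast
    have rn: "r < n" using r less.prems(1) unfolding clsd_def by auto
    note RO = rem_orb[OF less.prems(1) r]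
    obtain a where ca: "card (orbit \<gamma> r) = 2 * a" using less.prems(2) r by blast
    have a0: "0 < a" using card_orb_pos[OF rn] ca by simp
    have am: "a \<le> m" using RO(3) less.prems(3) ca by simp
    define S' where "S' = S - orbit \<gamma> r"
    have cS': "card S' = 2 * (m - a)" using RO(3) less.prems(3) ca am unfolding S'_def by simp
    have "m - a < m" using a0 am by simp
    moreover have "\<forall>z\<in>S'. even (card (orbit \<gamma> z))" using less.prems(2) unfolding S'_def by auto
    moreover have "2 * (m - a) \<le> n" using less.prems(4) by simp
    ultimately obtain f' where f'b: "bij_betw f' ({0..<m - a} \<union> {n - (m - a)..<n}) S'"
      and f'r: "\<forall>d<m - a. (\<gamma> ^^ (2 * d + 1)) (f' (n - 1 - d)) = f' d"
      using less.IH[of "m - a" S'] RO(1) cS' unfolding S'_def by blast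
    define h where "h = (\<lambda>j. if j < m then (\<gamma> ^^ (j mod a)) r else (\<gamma> ^^ (2 * a - 1 - (n - 1 - j) mod a)) r)"
    define B where "B = {m - a..<m} \<union> {n - m..<n - m + a}"
    define D' where "D' = {0..<m - a} \<union> {n - (m - a)..<n}"
    have hb: "bij_betw h B (orbit \<gamma> r)" unfolding h_def B_def using blk(1)[OF rn ca a0 am less.prems(4)] .
    have hr: "\<And>j. j \<in> {m - a..<m} \<Longrightarrow> (\<gamma> ^^ (2 * j + 1)) (h (n - 1 - j)) = h j"
      unfolding h_def using blk(2)[OF rn ca a0 am less.prems(4)] by blast
    define f where "f = (\<lambda>j. if j \<in> B then h j else f' j)"
    have mn: "2 * m \<le> n" by (rule less.prems(4))
    have BD: "B \<inter> D' = {}" unfolding B_def D'_def using mn am by auto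
    have "bij_betw f D' S' = bij_betw f' D' S'"
      by (rule bij_betw_cong) (use BD in \<open>auto simp: f_def\<close>)
    then have fb1: "bij_betw f D' S'" using f'b unfolding D'_def by simp
    have "bij_betw f B (orbit \<gamma> r) = bij_betw h B (orbit \<gamma> r)"
      by (rule bij_betw_cong) (auto simp: f_def)
    then have fb2: "bij_betw f B (orbit \<gamma> r)" using hb by simp
    have "bij_betw f (D' \<union> B) (S' \<union> orbit \<gamma> r)"
      by (rule bij_betw_combine[OF fb1 fb2]) (auto simp: S'_def)
    moreover have "D' \<union> B = {0..<m} \<union> {n - m..<n}" unfolding D'_def B_def using mn am by auto
    moreover have "S' \<union> orbit \<gamma> r = S" unfolding S'_def using RO(2) by auto
    ultimately have fb: "bij_betw f ({0..<m} \<union> {n - m..<n}) S" by simp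
    have fr: "(\<gamma> ^^ (2 * d + 1)) (f (n - 1 - d)) = f d" if d: "d < m" for d
    proof (cases "d < m - a")
      case True
      have "d \<notin> B" "n - 1 - d \<notin> B" using True mn unfolding B_def by auto
      then show ?thesis using f'r True unfolding f_def by simp
    next
      case False
      then have "d \<in> {m - a..<m}" using d by simp
      moreover have "d \<in> B" "n - 1 - d \<in> B" using False d mn unfolding B_def by auto
      ultimately show ?thesis using hr unfolding f_def by simp
    qed
    show ?thesis using fb fr by blast
  qed
qed

lemma high:
  assumes "z < n" "(\<gamma> ^^ (2 * e + 1)) z = w" "d + e + 1 = n"
  shows "(\<gamma> ^^ (2 * d + 1)) w = z"
proof -
  have "(\<gamma> ^^ (2 * d + 1)) w = (\<gamma> ^^ (2 * d + 1 + (2 * e + 1))) z"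
    using assms(2) by (simp only: funpow_add o_apply)
  also have "2 * d + 1 + (2 * e + 1) = 2 * n" using assms(3) by simp
  finally show ?thesis using g2n assms(1) by simp
qed


lemma exf_even: "\<not> (\<exists>z0<n. odd (card (orbit \<gamma> z0))) \<Longrightarrow> \<exists>f. bij_betw f {0..<n} {0..<n} \<and> (\<forall>d<n. (\<gamma> ^^ (2 * d + 1)) (f (n - 1 - d)) = f d)"
proof -
  assume False: "\<not> (\<exists>z0<n. odd (card (orbit \<gamma> z0)))"
  have cl: "clsd {0..<n}" unfolding clsd_def using orbg_sub by auto
  have ev: "\<forall>z\<in>{0..<n}. even (card (orbit \<gamma> z))" using False by auto
  have "even n" using EV[OF cl ev] by simp
  then obtain m where nm: "n = 2 * m" by (rule evenE)
  obtain f where fb: "bij_betw f ({0..<m} \<union> {n - m..<n}) {0..<n}"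
    and fr: "\<forall>d<m. (\<gamma> ^^ (2 * d + 1)) (f (n - 1 - d)) = f d"
    using EP[OF cl ev, of m] nm by auto
  have dom: "{0..<m} \<union> {n - m..<n} = {0..<n}" using nm by auto
  have fb': "bij_betw f {0..<n} {0..<n}" using fb dom by simp
  have "(\<gamma> ^^ (2 * d + 1)) (f (n - 1 - d)) = f d" if d: "d < n" for d
  proof (cases "d < m")
    case True then show ?thesis using fr by simp
  next
    case False
    define e where "e = n - 1 - d"
    have e: "e < m" "n - 1 - e = d" unfolding e_def using False d nm by auto
    have h1: "(\<gamma> ^^ (2 * e + 1)) (f d) = f e" using fr[rule_format, OF e(1)] e(2) by simp
    have h2: "f d < n" using fb' d unfolding bij_betw_def by auto
    have de: "d + e + 1 = n" using e_def d by linarith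
    have "(\<gamma> ^^ (2 * d + 1)) (f e) = f d" by (rule high[OF h2 h1 de])
    then show ?thesis unfolding e_def .
  qed
  then show ?thesis using fb' by blast
qed

lemma exf_odd: "(\<exists>z0<n. odd (card (orbit \<gamma> z0))) \<Longrightarrow> \<exists>f. bij_betw f {0..<n} {0..<n} \<and> (\<forall>d<n. (\<gamma> ^^ (2 * d + 1)) (f (n - 1 - d)) = f d)"
proof -
  assume True: "\<exists>z0<n. odd (card (orbit \<gamma> z0))"
  then obtain z0 where z0: "z0 < n" "odd (card (orbit \<gamma> z0))" by blast
  from z0(2) obtain a where ca: "card (orbit \<gamma> z0) = 2 * a + 1" by (rule oddE)
  define O0 where "O0 = orbit \<gamma> z0"
  define T where "T = {orbit \<gamma> z | z. z \<in> {0..<n} \<and> odd (card (orbit \<gamma> z))}"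
  have finT: "finite T" unfolding T_def
    by (rule finite_subset[of _ "(\<lambda>z. orbit \<gamma> z) ` {0..<n}"]) auto
  have allodd: "orbit \<gamma> z = O0" if "z < n" "odd (card (orbit \<gamma> z))" for z
  proof -
    have "orbit \<gamma> z \<in> T" "O0 \<in> T" unfolding T_def O0_def using that z0 by auto
    moreover have "card T \<le> Suc 0" using c2 unfolding T_def by simp
    then have "\<forall>x\<in>T. \<forall>y\<in>T. x = y" using card_le_Suc0_iff_eq[OF finT] by blast
    ultimately show ?thesis by blast
  qed
  have cl: "clsd {0..<n}" unfolding clsd_def using orbg_sub by auto
  note RO = rem_orb[OF cl, of z0]
  define S' where "S' = {0..<n} - O0"
  have clS: "clsd S'" using RO(1) z0 unfolding S'_def O0_def by simp
  have evS: "\<forall>z\<in>S'. even (card (orbit \<gamma> z))"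
  proof
    fix z assume z: "z \<in> S'"
    show "even (card (orbit \<gamma> z))"
    proof (rule ccontr)
      assume "\<not> even (card (orbit \<gamma> z))"
      then have "orbit \<gamma> z = O0" using allodd z unfolding S'_def by auto
      then show False using z self_orb[of z] unfolding S'_def by auto
    qed
  qed
  have "even (card S')" by (rule EV[OF clS evS])
  moreover have cn: "n = card S' + (2 * a + 1)" using RO(3) z0 ca unfolding S'_def O0_def by simp
  ultimately have cn': "n = card S' + (2 * a + 1)" by simp
  from \<open>even (card S')\<close> obtain m where m: "card S' = 2 * m" by (rule evenE)
  define d0 where "d0 = m + a"
  have nd: "n = 2 * d0 + 1" using cn' m unfolding d0_def by simp
  have ad: "a \<le> d0" unfolding d0_def by simp
  have mdef: "m = d0 - a" unfolding d0_def by simp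
  have nm: "n - m = d0 + a + 1" using nd unfolding d0_def by simp
  obtain f' where f'b: "bij_betw f' ({0..<m} \<union> {n - m..<n}) S'"
    and f'r: "\<forall>d<m. (\<gamma> ^^ (2 * d + 1)) (f' (n - 1 - d)) = f' d"
    using EP[OF clS evS m] nd unfolding d0_def by auto
  define B where "B = {d0 - a..<d0 + a + 1}"
  define h where "h = (\<lambda>e. (\<gamma> ^^ (e + a - d0)) z0)"
  have hb: "bij_betw h B O0" unfolding h_def B_def O0_def using oblk(1)[OF nd z0(1) ca ad] .
  have hr: "\<And>e. e \<in> B \<Longrightarrow> (\<gamma> ^^ (2 * e + 1)) (h (n - 1 - e)) = h e"
    unfolding h_def B_def using oblk(2)[OF nd z0(1) ca ad] by blast
  define f where "f = (\<lambda>e. if e \<in> B then h e else f' e)"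
  define D' where "D' = {0..<m} \<union> {n - m..<n}"
  have BD: "B \<inter> D' = {}" unfolding B_def D'_def using nm mdef by auto
  have "bij_betw f D' S' = bij_betw f' D' S'"
    by (rule bij_betw_cong) (use BD in \<open>auto simp: f_def\<close>)
  then have fb1: "bij_betw f D' S'" using f'b unfolding D'_def by simp
  have "bij_betw f B O0 = bij_betw h B O0"
    by (rule bij_betw_cong) (auto simp: f_def)
  then have fb2: "bij_betw f B O0" using hb by simp
  have "bij_betw f (D' \<union> B) (S' \<union> O0)"
    by (rule bij_betw_combine[OF fb1 fb2]) (auto simp: S'_def)
  moreover have "D' \<union> B = {0..<n}" unfolding D'_def B_def using nm mdef nd by auto
  moreover have "S' \<union> O0 = {0..<n}" unfolding S'_def O0_def using RO(2) z0 by auto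
  ultimately have fb: "bij_betw f {0..<n} {0..<n}" by simp
  have fr: "(\<gamma> ^^ (2 * d + 1)) (f (n - 1 - d)) = f d" if d: "d < n" for d
  proof -
    have "d \<in> B \<or> d < m \<or> d \<ge> n - m" unfolding B_def atLeastLessThan_iff using nm mdef by linarith
    then consider (c1) "d \<in> B" | (c2) "d < m" | (c3) "d \<ge> n - m" by blast
    then show ?thesis
    proof cases
      case c1
      then have "n - 1 - d \<in> B" using nd unfolding B_def by auto
      then show ?thesis using hr[OF c1] c1 unfolding f_def by simp
    next
      case c2
      then have "d \<notin> B" "n - 1 - d \<notin> B" using nd mdef unfolding B_def by auto
      then show ?thesis using f'r c2 unfolding f_def by simp
    next
      case c3
      define e where "e = n - 1 - d"
      have e: "e < m" "n - 1 - e = d" unfolding e_def using c3 d nm mdef by auto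
      have "e \<notin> B" "d \<notin> B" using e c3 nm mdef unfolding B_def by auto
      then have h1: "(\<gamma> ^^ (2 * e + 1)) (f d) = f e" using f'r[rule_format, OF e(1)] e(2) unfolding f_def by simp
      have h2: "f d < n" using fb d unfolding bij_betw_def by auto
      have de: "d + e + 1 = n" using e_def d by linarith
      have "(\<gamma> ^^ (2 * d + 1)) (f e) = f d" by (rule high[OF h2 h1 de])
      then show ?thesis unfolding e_def .
    qed
  qed
  show ?thesis using fb fr by blast
qed


lemma exf: "\<exists>f. bij_betw f {0..<n} {0..<n} \<and> (\<forall>d<n. (\<gamma> ^^ (2 * d + 1)) (f (n - 1 - d)) = f d)"
proof (cases "\<exists>z0<n. odd (card (orbit \<gamma> z0))")
  case True then show ?thesis by (rule exf_odd)
next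
  case False then show ?thesis by (rule exf_even)
qed

end

theorem theorem4p8:
  fixes n :: nat and \<beta> \<gamma> :: "nat \<Rightarrow> nat"
  assumes "\<beta> permutes {0..<n}" and "\<gamma> permutes {0..<n}"
    and "cyclic_on \<beta> {0..<n}"
  shows "in_Par12 n id \<beta> \<gamma> \<longleftrightarrow>
           (\<forall>z\<in>{0..<n}. card (orbit \<gamma> z) dvd 2 * n) \<and>
           card {orbit \<gamma> z | z. z \<in> {0..<n} \<and> odd (card (orbit \<gamma> z))} \<le> 1"
proof
  assume "in_Par12 n id \<beta> \<gamma>"
  then obtain L where L: "latin_square n L" "paratopism12_image id \<beta> \<gamma> L = L"
    unfolding in_Par12_def by blast
  interpret N: NEC n \<beta> \<gamma> L
    by (rule NEC.intro, rule LSQ.intro, fact assms(1), fact assms(2), fact assms(3), rule NEC_axioms.intro, fact L(1), fact L(2))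
  show "(\<forall>z\<in>{0..<n}. card (orbit \<gamma> z) dvd 2 * n) \<and>
           card {orbit \<gamma> z | z. z \<in> {0..<n} \<and> odd (card (orbit \<gamma> z))} \<le> 1"
    using N.cond1 N.cond2 by simp
next
  assume H: "(\<forall>z\<in>{0..<n}. card (orbit \<gamma> z) dvd 2 * n) \<and>
           card {orbit \<gamma> z | z. z \<in> {0..<n} \<and> odd (card (orbit \<gamma> z))} \<le> 1"
  interpret S: SUF n \<beta> \<gamma>
    by (rule SUF.intro, rule LSQ.intro, fact assms(1), fact assms(2), fact assms(3), rule SUF_axioms.intro, use H in simp, use H in simp)
  obtain f where fb: "bij_betw f {0..<n} {0..<n}"
    and fr: "\<forall>d<n. (\<gamma> ^^ (2 * d + 1)) (f (n - 1 - d)) = f d"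
    using S.exf by blast
  interpret C: CONS n \<beta> \<gamma> f
    by (rule CONS.intro, rule LSQ.intro, fact assms(1), fact assms(2), fact assms(3), rule CONS_axioms.intro,
        fact fb, use fr in simp, rule S.g2n)
  show "in_Par12 n id \<beta> \<gamma>" by (rule C.in_par)
qed

end
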